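(* Let $\mathcal{K}$ be a convex cone in $\mathbb{R}^d$ and $F$ a Legendre function with domain $\mathcal{K}$. Let $\Pi^\dagger_{\mathrm{all}}=\mathcal{K}^{\mathcal{X}}$ and $\pi_0\in\Pi^\dagger_{\mathrm{all}}$. Suppose that for any $p,q\in\mathcal{K}$ and weights $\lambda_1,\lambda_2>0$, the point $c^*$ defined by $\nabla F(c^* )=\frac{\lambda_1\nabla F(p)+\lambda_2\nabla F(q)}{\lambda_1+\lambda_2}$ lies in $\mathcal{K}$. Then the minimizer $\overline\pi$ of $\pi\mapsto\mathbb{E}_{x\sim\mathcal{D}_{\mathcal{X}}}[\mathsf{B}_F(\pi(x)\parallel\pi_0(x))]$ over the linear subspace $\mathcal{C}^{\dagger\dagger}_{\mathrm{coh}}$ lies in $\mathcal{C}^\dagger_{\mathrm{coh}}=\mathcal{C}^{\dagger\dagger}_{\mathrm{coh}}\cap\Pi^\dagger_{\mathrm{all}}$.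
   Context: $\mathcal{X}$ finite; $\mathcal{D}_{\mathcal{X}}$ a full-support distribution on $\mathcal{X}$; $\Phi\colon\mathcal{X}\to\mathcal{X}$ an involution; $\mathcal{C}^{\dagger\dagger}_{\mathrm{coh}}=\{\pi\colon\mathcal{X}\to\mathbb{R}^d:\pi(x)=\pi(\Phi(x))\ \forall x\}$. $\mathsf{B}_F(p\parallel q)=F(p)-F(q)-\langle\nabla F(q),p-q\rangle$. A Legendre function is proper, closed, convex, differentiable on the interior $\Omega$ of its domain, with $\nabla F\colon\Omega\to\mathrm{int}(\mathrm{dom}F^* )$ a bijection. *)

theory Defs
  imports "HOL-Analysis.Analysis"
begin

text \<open>Convex cone: closed under addition-free convex combinations and positive scaling
  (the apex 0 need not belong to it, e.g. the open positive orthant).\<close>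
definition pos_cone :: "'a::real_vector set \<Rightarrow> bool" where
  "pos_cone K \<longleftrightarrow> (\<forall>x\<in>K. \<forall>c::real. c > 0 \<longrightarrow> c *\<^sub>R x \<in> K)"

definition convex_cone_pos :: "'a::real_vector set \<Rightarrow> bool" where
  "convex_cone_pos K \<longleftrightarrow> convex K \<and> pos_cone K"

definition grad :: "('a::euclidean_space \<Rightarrow> real) \<Rightarrow> 'a \<Rightarrow> 'a" where
  "grad F x = (SOME g. (F has_derivative (\<lambda>h. g \<bullet> h)) (at x))"

text \<open>Effective domain of the convex conjugate of the extended function that equals
  F on K and +infinity outside K.\<close>
definition conj_dom :: "('a::euclidean_space \<Rightarrow> real) \<Rightarrow> 'a set \<Rightarrow> 'a set" where
  "conj_dom F K = {y. \<exists>M. \<forall>x\<in>K. y \<bullet> x - F x \<le> M}"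

definition legendre :: "('a::euclidean_space \<Rightarrow> real) \<Rightarrow> 'a set \<Rightarrow> bool" where
  "legendre F K \<longleftrightarrow>
     K \<noteq> {} \<and> convex K \<and> convex_on K F \<and>
     closed {(x, t::real). x \<in> K \<and> F x \<le> t} \<and>
     (\<forall>x\<in>interior K. F differentiable (at x)) \<and>
     bij_betw (grad F) (interior K) (interior (conj_dom F K))"

definition bregman :: "('a::euclidean_space \<Rightarrow> real) \<Rightarrow> 'a \<Rightarrow> 'a \<Rightarrow> real" where
  "bregman F p q = F p - F q - grad F q \<bullet> (p - q)"

text \<open>Expected Bregman divergence E_{x~D}[B_F(f x || f0 x)], as an extended real:
  it is +infinity as soon as some f x lies outside the domain K (D has full support).\<close>
definition exp_bregman ::
  "('a::euclidean_space \<Rightarrow> real) \<Rightarrow> 'a set \<Rightarrow> ('x::finite \<Rightarrow> real) \<Rightarrow> ('x \<Rightarrow> 'a) \<Rightarrow> ('x \<Rightarrow> 'a) \<Rightarrow> ereal" where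
  "exp_bregman F K D f0 f =
     (if \<forall>x. f x \<in> K then ereal (\<Sum>x\<in>UNIV. D x * bregman F (f x) (f0 x)) else \<infinity>)"

definition coh2 :: "('x \<Rightarrow> 'x) \<Rightarrow> ('x \<Rightarrow> 'a) set" where
  "coh2 \<Phi> = {f. \<forall>x. f x = f (\<Phi> x)}"

end

theory Submission
  imports Defs
begin

lemma linear_inner_rep:
  fixes f :: "'a::euclidean_space \<Rightarrow> real"
  assumes "linear f"
  shows "f = (\<lambda>h. (\<Sum>i\<in>Basis. f i *\<^sub>R i) \<bullet> h)"
proof
  fix h
  have "f h = f h \<bullet> 1" by simp
  also have "\<dots> = (\<Sum>i\<in>Basis. (h\<bullet>i) * (f i \<bullet> 1))" by (rule Linear_Algebra.linear_componentwise[OF assms])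
  also have "\<dots> = (\<Sum>i\<in>Basis. f i *\<^sub>R i) \<bullet> h"
    by (simp add: inner_sum_right inner_commute mult.commute)
  finally show "f h = (\<Sum>i\<in>Basis. f i *\<^sub>R i) \<bullet> h" .
qed

lemma grad_deriv:
  fixes F :: "'a::euclidean_space \<Rightarrow> real"
  assumes "F differentiable (at x)"
  shows "(F has_derivative (\<lambda>h. grad F x \<bullet> h)) (at x)"
proof -
  from assms obtain f where f: "(F has_derivative f) (at x)" unfolding differentiable_def by blast
  hence "linear f" using has_derivative_linear by blast
  hence "\<exists>g. (F has_derivative (\<lambda>h. g \<bullet> h)) (at x)" using f linear_inner_rep by metis
  thus ?thesis unfolding grad_def by (rule someI_ex)
qed

lemma above_tangent:
  fixes F :: "'a::euclidean_space \<Rightarrow> real"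
  assumes cv: "convex_on K F" and K: "convex K" and c: "c \<in> interior K" and x: "x \<in> K"
    and d: "F differentiable (at c)"
  shows "F x - F c \<ge> grad F c \<bullet> (x - c)"
proof -
  define A where "A = {t::real. c + t *\<^sub>R (x - c) \<in> K}"
  define g where "g t = F (c + t *\<^sub>R (x - c))" for t
  have convA: "convex A" unfolding A_def convex_alt
  proof clarify
    fix s t u :: real assume s: "c + s *\<^sub>R (x - c) \<in> K" and t: "c + t *\<^sub>R (x - c) \<in> K"
      and u: "0 \<le> u" "u \<le> 1"
    have "c + ((1 - u) * s + u * t) *\<^sub>R (x - c) = (1 - u) *\<^sub>R (c + s *\<^sub>R (x - c)) + u *\<^sub>R (c + t *\<^sub>R (x - c))"
      by (simp add: algebra_simps)
    thus "c + ((1 - u) *\<^sub>R s + u *\<^sub>R t) *\<^sub>R (x - c) \<in> K"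
      using K s t u by (simp add: convex_alt)
  qed
  have cvg: "convex_on A g"
  proof (rule convex_onI[OF _ convA])
    fix u s t :: real assume u0: "u > 0" "u < 1" and s: "s \<in> A" and t: "t \<in> A"
    hence u: "0 \<le> u" "u \<le> 1" by auto
    have e: "c + ((1 - u) * s + u * t) *\<^sub>R (x - c) = (1 - u) *\<^sub>R (c + s *\<^sub>R (x - c)) + u *\<^sub>R (c + t *\<^sub>R (x - c))"
      by (simp add: algebra_simps)
    show "g ((1 - u) *\<^sub>R s + u *\<^sub>R t) \<le> (1 - u) * g s + u * g t"
      unfolding g_def using convex_onD[OF cv, of u] s t u e by (simp add: A_def)
  qed
  have "open {t::real. c + t *\<^sub>R (x - c) \<in> interior K}"
    by (rule open_vimage[where f = "\<lambda>t. c + t *\<^sub>R (x - c)", unfolded vimage_def]) (auto intro!: continuous_intros)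
  moreover have "{t::real. c + t *\<^sub>R (x - c) \<in> interior K} \<subseteq> A" unfolding A_def using interior_subset by blast
  moreover have "0 \<in> {t::real. c + t *\<^sub>R (x - c) \<in> interior K}" using c by simp
  ultimately have i0: "0 \<in> interior A" by (meson interior_maximal interior_subset subsetD)
  have "x \<in> K" by fact
  hence "1 \<in> A" by (simp add: A_def)
  have "((\<lambda>t. c + t *\<^sub>R (x - c)) has_derivative (\<lambda>t. t *\<^sub>R (x - c))) (at 0)"
    by (auto intro!: derivative_eq_intros)
  moreover have "(F has_derivative (\<lambda>h. grad F c \<bullet> h)) (at (c + 0 *\<^sub>R (x - c)))"
    using grad_deriv[OF d] by simp
  ultimately have "(g has_derivative (\<lambda>t. grad F c \<bullet> (t *\<^sub>R (x - c)))) (at 0)"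
    unfolding g_def using has_derivative_compose[of "\<lambda>t. c + t *\<^sub>R (x - c)"] by blast
  hence "(g has_field_derivative (grad F c \<bullet> (x - c))) (at 0)"
    unfolding has_field_derivative_def by (simp add: mult.commute[of _ "grad F c \<bullet> (x - c)"])
  hence "(g has_field_derivative (grad F c \<bullet> (x - c))) (at 0 within A)"
    by (rule has_field_derivative_at_within)
  from convex_on_imp_above_tangent[OF cvg convex_connected[OF convA] i0 \<open>1 \<in> A\<close> this]
  show ?thesis by (simp add: g_def)
qed


lemma convex_conj_dom: "convex (conj_dom F K)"
  unfolding convex_alt conj_dom_def
proof clarify
  fix y1 y2 M1 M2 and u :: real
  assume 1: "\<forall>x\<in>K. y1 \<bullet> x - F x \<le> M1" and 2: "\<forall>x\<in>K. y2 \<bullet> x - F x \<le> M2" and u: "0 \<le> u" "u \<le> 1"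
  show "\<exists>M. \<forall>x\<in>K. ((1 - u) *\<^sub>R y1 + u *\<^sub>R y2) \<bullet> x - F x \<le> M"
  proof (intro exI ballI)
    fix x assume x: "x \<in> K"
    have "((1 - u) *\<^sub>R y1 + u *\<^sub>R y2) \<bullet> x - F x = (1 - u) * (y1 \<bullet> x - F x) + u * (y2 \<bullet> x - F x)"
      by (simp add: algebra_simps inner_add_left)
    also have "\<dots> \<le> (1 - u) * M1 + u * M2"
      using 1 2 x u by (intro add_mono mult_left_mono) auto
    finally show "((1 - u) *\<^sub>R y1 + u *\<^sub>R y2) \<bullet> x - F x \<le> (1 - u) * M1 + u * M2" .
  qed
qed

lemma centroid_pt:
  assumes leg: "legendre F K" and p: "p \<in> interior K" and q: "q \<in> interior K"
    and l: "l1 > 0" "l2 > 0"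
  defines "y \<equiv> (1 / (l1 + l2)) *\<^sub>R (l1 *\<^sub>R grad F p + l2 *\<^sub>R grad F q)"
  shows "inv_into (interior K) (grad F) y \<in> interior K \<and> grad F (inv_into (interior K) (grad F) y) = y"
proof -
  have bij: "bij_betw (grad F) (interior K) (interior (conj_dom F K))" using leg unfolding legendre_def by blast
  hence gp: "grad F p \<in> interior (conj_dom F K)" and gq: "grad F q \<in> interior (conj_dom F K)"
    using p q bij_betwE by blast+
  have "y = (l1 / (l1 + l2)) *\<^sub>R grad F p + (l2 / (l1 + l2)) *\<^sub>R grad F q"
    unfolding y_def by (simp add: scaleR_add_right)
  moreover have "(l1 / (l1 + l2)) + (l2 / (l1 + l2)) = 1" using l by (simp add: add_divide_distrib[symmetric])
  ultimately have "y \<in> interior (conj_dom F K)"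
    using convexD[OF convex_interior[OF convex_conj_dom] gp gq] l by simp
  hence "y \<in> grad F ` interior K" using bij by (simp add: bij_betw_def)
  thus ?thesis by (simp add: inv_into_into f_inv_into_f)
qed

lemma bregman_nonneg:
  assumes leg: "legendre F K" and c: "c \<in> interior K" and x: "x \<in> K"
  shows "bregman F x c \<ge> 0"
  using above_tangent[of K F c x] leg c x unfolding legendre_def bregman_def by auto

lemma three_point:
  assumes g: "(l1 + l2) *\<^sub>R grad F c = l1 *\<^sub>R grad F p + l2 *\<^sub>R grad F q"
  shows "l1 * bregman F z p + l2 * bregman F z q
     = (l1 + l2) * bregman F z c + l1 * bregman F c p + l2 * bregman F c q"
proof -
  have e: "(l1 + l2) * (grad F c \<bullet> v) = l1 * (grad F p \<bullet> v) + l2 * (grad F q \<bullet> v)" for v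
    using arg_cong[OF g, of "\<lambda>w. w \<bullet> v"] by (simp add: inner_add_left)
  have "l1 * bregman F z p + l2 * bregman F z q - ((l1 + l2) * bregman F z c + l1 * bregman F c p + l2 * bregman F c q)
     = - (l1 * (grad F p \<bullet> (z - c)) + l2 * (grad F q \<bullet> (z - c))) + (l1 + l2) * (grad F c \<bullet> (z - c))"
    unfolding bregman_def by (simp add: algebra_simps inner_diff_right)
  also have "\<dots> = 0" using e[of "z - c"] by simp
  finally show ?thesis by simp
qed


theorem theorem12:
  fixes K :: "(real^'d) set" and F :: "real^'d \<Rightarrow> real"
    and D :: "'x::finite \<Rightarrow> real" and \<Phi> :: "'x \<Rightarrow> 'x" and \<pi>\<^sub>0 :: "'x \<Rightarrow> real^'d"
  assumes D_pos: "\<forall>x. D x > 0" and D_sum: "(\<Sum>x\<in>UNIV. D x) = 1"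
    and invol: "\<forall>x. \<Phi> (\<Phi> x) = x"
    and cone: "convex_cone_pos K"
    and leg: "legendre F K"
    and \<pi>\<^sub>0: "\<forall>x. \<pi>\<^sub>0 x \<in> interior K"
    and centroid: "\<forall>p\<in>interior K. \<forall>q\<in>interior K. \<forall>l1 l2::real. l1 > 0 \<longrightarrow> l2 > 0 \<longrightarrow>
        inv_into (interior K) (grad F)
          ((1 / (l1 + l2)) *\<^sub>R (l1 *\<^sub>R grad F p + l2 *\<^sub>R grad F q)) \<in> K"
  shows "(\<exists>fb\<in>coh2 \<Phi>. \<forall>f\<in>coh2 \<Phi>. exp_bregman F K D \<pi>\<^sub>0 fb \<le> exp_bregman F K D \<pi>\<^sub>0 f)
     \<and> (\<forall>fb\<in>coh2 \<Phi>. (\<forall>f\<in>coh2 \<Phi>. exp_bregman F K D \<pi>\<^sub>0 fb \<le> exp_bregman F K D \<pi>\<^sub>0 f)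
           \<longrightarrow> fb \<in> coh2 \<Phi> \<inter> {f. \<forall>x. f x \<in> K})"
proof -
  define fb where "fb x = inv_into (interior K) (grad F)
      ((1 / (D x + D (\<Phi> x))) *\<^sub>R (D x *\<^sub>R grad F (\<pi>\<^sub>0 x) + D (\<Phi> x) *\<^sub>R grad F (\<pi>\<^sub>0 (\<Phi> x))))" for x
  have fbx: "fb x \<in> interior K \<and> grad F (fb x) =
      (1 / (D x + D (\<Phi> x))) *\<^sub>R (D x *\<^sub>R grad F (\<pi>\<^sub>0 x) + D (\<Phi> x) *\<^sub>R grad F (\<pi>\<^sub>0 (\<Phi> x)))" for x
    unfolding fb_def using centroid_pt[OF leg] \<pi>\<^sub>0 D_pos by blast
  have fbK: "fb x \<in> K" for x using fbx interior_subset by blast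
  have fbc: "fb \<in> coh2 \<Phi>" unfolding coh2_def fb_def using invol by (simp add: add.commute)
  define S where "S f = (\<Sum>x\<in>UNIV. D x * bregman F (f x) (\<pi>\<^sub>0 x))" for f :: "'x \<Rightarrow> real^'d"
  have inj: "inj \<Phi>" using invol by (metis injI)
  have surj: "\<Phi> ` UNIV = UNIV" using invol by (metis surjI surj_def)
  have S2: "2 * S f = (\<Sum>x\<in>UNIV. D x * bregman F (f x) (\<pi>\<^sub>0 x) + D (\<Phi> x) * bregman F (f x) (\<pi>\<^sub>0 (\<Phi> x)))"
    if f: "f \<in> coh2 \<Phi>" for f
  proof -
    have "S f = (\<Sum>x\<in>\<Phi> ` UNIV. D x * bregman F (f x) (\<pi>\<^sub>0 x))" unfolding S_def surj ..
    also have "\<dots> = (\<Sum>x\<in>UNIV. D (\<Phi> x) * bregman F (f (\<Phi> x)) (\<pi>\<^sub>0 (\<Phi> x)))"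
      by (simp add: sum.reindex[OF inj])
    also have "\<dots> = (\<Sum>x\<in>UNIV. D (\<Phi> x) * bregman F (f x) (\<pi>\<^sub>0 (\<Phi> x)))"
    proof -
      have h: "f (\<Phi> y) = f y" for y using f unfolding coh2_def by (metis (mono_tags) mem_Collect_eq)
      show ?thesis by (simp only: h)
    qed
    finally show ?thesis unfolding S_def[of f] by (simp add: sum.distrib)
  qed
  have pt: "D x * bregman F (fb x) (\<pi>\<^sub>0 x) + D (\<Phi> x) * bregman F (fb x) (\<pi>\<^sub>0 (\<Phi> x))
      \<le> D x * bregman F z (\<pi>\<^sub>0 x) + D (\<Phi> x) * bregman F z (\<pi>\<^sub>0 (\<Phi> x))" if z: "z \<in> K" for x z
  proof -
    have pos: "D x + D (\<Phi> x) > 0" using D_pos by (simp add: add_pos_pos)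
    have "(D x + D (\<Phi> x)) *\<^sub>R grad F (fb x) = D x *\<^sub>R grad F (\<pi>\<^sub>0 x) + D (\<Phi> x) *\<^sub>R grad F (\<pi>\<^sub>0 (\<Phi> x))"
      using fbx[of x] pos by simp
    from three_point[OF this, of z]
    have "D x * bregman F z (\<pi>\<^sub>0 x) + D (\<Phi> x) * bregman F z (\<pi>\<^sub>0 (\<Phi> x)) =
       (D x + D (\<Phi> x)) * bregman F z (fb x) + D x * bregman F (fb x) (\<pi>\<^sub>0 x) + D (\<Phi> x) * bregman F (fb x) (\<pi>\<^sub>0 (\<Phi> x))" .
    moreover have "(D x + D (\<Phi> x)) * bregman F z (fb x) \<ge> 0"
      using bregman_nonneg[OF leg _ z] fbx pos by simp
    ultimately show ?thesis by linarith
  qed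
  have Sle: "S fb \<le> S f" if f: "f \<in> coh2 \<Phi>" "\<forall>x. f x \<in> K" for f
  proof -
    have "2 * S fb \<le> 2 * S f" unfolding S2[OF fbc] S2[OF f(1)]
      by (rule sum_mono) (use pt f(2) in blast)
    thus ?thesis by simp
  qed
  have efb: "exp_bregman F K D \<pi>\<^sub>0 fb = ereal (S fb)" unfolding exp_bregman_def S_def using fbK by simp
  have min: "\<forall>f\<in>coh2 \<Phi>. exp_bregman F K D \<pi>\<^sub>0 fb \<le> exp_bregman F K D \<pi>\<^sub>0 f"
  proof
    fix f :: "'x \<Rightarrow> real^'d" assume f: "f \<in> coh2 \<Phi>"
    show "exp_bregman F K D \<pi>\<^sub>0 fb \<le> exp_bregman F K D \<pi>\<^sub>0 f"
    proof (cases "\<forall>x. f x \<in> K")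
      case True
      thus ?thesis unfolding efb using Sle[OF f True] by (simp add: exp_bregman_def S_def)
    next
      case False
      thus ?thesis unfolding exp_bregman_def by auto
    qed
  qed
  show ?thesis
  proof (intro conjI ballI impI)
    show "\<exists>fb::'x \<Rightarrow> real^'d\<in>coh2 \<Phi>. \<forall>f\<in>coh2 \<Phi>. exp_bregman F K D \<pi>\<^sub>0 fb \<le> exp_bregman F K D \<pi>\<^sub>0 f"
      using fbc min by blast
  next
    fix g :: "'x \<Rightarrow> real^'d" assume g: "g \<in> coh2 \<Phi>" and gm: "\<forall>f\<in>coh2 \<Phi>. exp_bregman F K D \<pi>\<^sub>0 g \<le> exp_bregman F K D \<pi>\<^sub>0 f"
    have "exp_bregman F K D \<pi>\<^sub>0 g \<le> ereal (S fb)" using gm fbc efb by metis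
    hence "\<forall>x. g x \<in> K" by (cases "\<forall>x. g x \<in> K") (auto simp: exp_bregman_def)
    thus "g \<in> coh2 \<Phi> \<inter> {f. \<forall>x. f x \<in> K}" using g by blast
  qed
qed

end
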